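(* Fix $Y$, $q>0$, $\beta\in(0,1)$ and $\rho\in\mathbb R$, and let $(a^*(\delta),b^*(\delta))$ be the selected pair as a function of $\delta>0$. Then $b^*(\delta)>0$ for all sufficiently large $\delta$, and $b^*(\delta)\to\infty$ as $\delta\uparrow\infty$.
   Context: Let $Y$ be a spectrally positive Lévy process (not a subordinator) with Laplace exponent $\psi_Y(\theta)=\log\mathbb E[e^{-\theta Y_1}]$ and $\mathbb E[Y_1]=-\psi_Y'(0+)<\infty$. For $\delta>0$, let $X_t=Y_t-\delta t$, with $\psi_X(\theta)=\psi_Y(\theta)+\delta\theta$; the objects below depending on $X$ depend on $\delta$. The scale functions $\mathbb W^{(q)}$ and $W^{(q)}$ vanish on $(-\infty,0)$, are continuous and strictly increasing on $[0,\infty)$, and have Laplace transforms $1/(\psi_Y(\theta)-q)$ and $1/(\psi_X(\theta)-q)$, respectively. Let $\mathbb Z^{(q)}(x)=1+q\int_0^x\mathbb W^{(q)}$, $Z^{(q)}(x)=1+q\int_0^xW^{(q)}$, $\overline Z^{(q)}(x)=\int_0^xZ^{(q)}$, and $R^{(q)}(z)=\overline Z^{(q)}(z)+\psi_X'(0+)/q$. Let $\tilde r^{(q)}_c(z)=R^{(q)}(z)+\delta\int_c^z\mathbb W^{(q)}(z-y)Z^{(q)}(y)\,dy$ and $\Gamma(a,b)=\delta\mathbb Z^{(q)}(a)-q\rho-q\beta\tilde r^{(q)}_{b-a}(b)$ for $0\le a\le b$. Selected pair: if $\Gamma(0,0)=\delta-q\rho-\beta\psi_X'(0+)\le0$, then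 $a^*=b^*=0$. Otherwise, $b^*>0$ is the unique root of $\min_{0\le a\le b^*}\Gamma(a,b^* )=0$, and $a^*$ is the unique minimizer of $a\mapsto\Gamma(a,b^* )$ on $[0,b^*]$. *)

theory Defs
  imports "HOL-Analysis.Analysis"
begin

text \<open>A spectrally positive Levy process Y is represented through its Levy-Khintchine
  triple (c, sigma, Pi): Pi is a Levy measure on (0,infinity), and the Laplace exponent is
  psi_Y(theta) = log E[exp(-theta Y_1)]
     = c theta + sigma^2 theta^2 / 2 + int (exp(-theta z) - 1 + theta z 1_{z<1}) Pi(dz).\<close>

definition psiY :: "real \<Rightarrow> real \<Rightarrow> real measure \<Rightarrow> real \<Rightarrow> real" where
  "psiY c \<sigma> Lm \<theta> = c * \<theta> + \<sigma>\<^sup>2 / 2 * \<theta>\<^sup>2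
      + (\<integral>z. (exp (- \<theta> * z) - 1 + \<theta> * z * indicator {..<1} z) \<partial>Lm)"

text \<open>Y is a subordinator (non-decreasing paths) iff sigma = 0, int_{(0,1)} z Pi(dz) < infinity,
  and the drift  -(c + int_{(0,1)} z Pi(dz))  is non-negative.\<close>
definition is_subordinator_triple :: "real \<Rightarrow> real \<Rightarrow> real measure \<Rightarrow> bool" where
  "is_subordinator_triple c \<sigma> Lm \<longleftrightarrow>
     \<sigma> = 0 \<and> set_integrable Lm {..<1} (\<lambda>z. z) \<and> c + (LINT z:{..<1}|Lm. z) \<le> 0"

text \<open>Standing assumptions: spectrally positive Levy process, not a subordinator,
  with E[Y_1] < infinity (equivalently int_{[1,infinity)} z Pi(dz) < infinity).\<close>
definition sp_levy_triple :: "real \<Rightarrow> real \<Rightarrow> real measure \<Rightarrow> bool" where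
  "sp_levy_triple c \<sigma> Lm \<longleftrightarrow>
     sets Lm = sets borel \<and> emeasure Lm {..0} = 0 \<and> \<sigma> \<ge> 0 \<and>
     integrable Lm (\<lambda>z. min 1 (z\<^sup>2)) \<and>
     set_integrable Lm {1..} (\<lambda>z. z) \<and>
     \<not> is_subordinator_triple c \<sigma> Lm"

text \<open>Right derivative at 0 of a Laplace exponent (note psi(0) = 0).\<close>
definition dpsi0 :: "(real \<Rightarrow> real) \<Rightarrow> real" where
  "dpsi0 \<psi> = Lim (at_right 0) (\<lambda>\<theta>. \<psi> \<theta> / \<theta>)"

text \<open>q-scale function of a Laplace exponent psi: vanishes on (-infinity,0), continuous and
  strictly increasing on [0,infinity), with Laplace transform 1/(psi(theta)-q) for
  theta > Phi(q) (equivalently theta > 0 with psi(theta) > q).\<close>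
definition is_scale_fun :: "(real \<Rightarrow> real) \<Rightarrow> real \<Rightarrow> (real \<Rightarrow> real) \<Rightarrow> bool" where
  "is_scale_fun \<psi> q W \<longleftrightarrow>
     (\<forall>x<0. W x = 0) \<and> continuous_on {0..} W \<and> strict_mono_on {0..} W \<and>
     (\<forall>\<theta>>0. \<psi> \<theta> > q \<longrightarrow>
        set_integrable lborel {0..} (\<lambda>x. exp (- \<theta> * x) * W x) \<and>
        (LINT x:{0..}|lborel. exp (- \<theta> * x) * W x) = 1 / (\<psi> \<theta> - q))"

definition Zq :: "real \<Rightarrow> (real \<Rightarrow> real) \<Rightarrow> real \<Rightarrow> real" where
  "Zq q W x = 1 + q * integral {0..x} W"

definition Zbar :: "real \<Rightarrow> (real \<Rightarrow> real) \<Rightarrow> real \<Rightarrow> real" where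
  "Zbar q W x = integral {0..x} (Zq q W)"

text \<open>R^(q)(z) = Zbar^(q)(z) + psi_X'(0+)/q, with WX the scale function of X and dX = psi_X'(0+).\<close>
definition Rq :: "real \<Rightarrow> (real \<Rightarrow> real) \<Rightarrow> real \<Rightarrow> real \<Rightarrow> real" where
  "Rq q WX dX z = Zbar q WX z + dX / q"

definition rtilde :: "real \<Rightarrow> real \<Rightarrow> (real \<Rightarrow> real) \<Rightarrow> (real \<Rightarrow> real) \<Rightarrow> real \<Rightarrow> real \<Rightarrow> real \<Rightarrow> real" where
  "rtilde q \<delta> WY WX dX c z = Rq q WX dX z + \<delta> * integral {c..z} (\<lambda>y. WY (z - y) * Zq q WX y)"

definition Gam :: "real \<Rightarrow> real \<Rightarrow> real \<Rightarrow> real \<Rightarrow> (real \<Rightarrow> real) \<Rightarrow> (real \<Rightarrow> real) \<Rightarrow> real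
                    \<Rightarrow> real \<Rightarrow> real \<Rightarrow> real" where
  "Gam q \<rho> \<beta> \<delta> WY WX dX a b =
     \<delta> * Zq q WY a - q * \<rho> - q * \<beta> * rtilde q \<delta> WY WX dX (b - a) b"

definition selected_b :: "real \<Rightarrow> real \<Rightarrow> real \<Rightarrow> real \<Rightarrow> (real \<Rightarrow> real) \<Rightarrow> (real \<Rightarrow> real) \<Rightarrow> real
                    \<Rightarrow> real" where
  "selected_b q \<rho> \<beta> \<delta> WY WX dX =
     (let G = Gam q \<rho> \<beta> \<delta> WY WX dX in
      if G 0 0 \<le> 0 then 0
      else (THE b. b > 0 \<and> (\<exists>a\<in>{0..b}. G a b = 0) \<and> (\<forall>a\<in>{0..b}. G a b \<ge> 0)))"

end

theory Submission
  imports Defs "HOL-Real_Asymp.Real_Asymp"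
begin



definition goodW :: "(real \<Rightarrow> real) \<Rightarrow> bool" where
  "goodW W \<longleftrightarrow> (\<forall>x<0. W x = 0) \<and> continuous_on {0..} W \<and> mono_on {0..} W \<and> (\<forall>x\<ge>0. 0 \<le> W x)"

lemma goodW_int: "goodW W \<Longrightarrow> 0 \<le> s \<Longrightarrow> W integrable_on {s..t}"
  unfolding goodW_def
  by (metis atLeastAtMost_iff atLeast_iff continuous_on_subset integrable_continuous_real order_trans subsetI)

lemma goodW_seg:
  assumes g: "goodW W" and "0 \<le> s" "s \<le> t"
  shows "integral {0..t} W = integral {0..s} W + integral {s..t} W
     \<and> 0 \<le> integral {s..t} W \<and> integral {s..t} W \<le> (t-s) * W t"
proof (intro conjI)
  show "integral {0..t} W = integral {0..s} W + integral {s..t} W"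
    using Henstock_Kurzweil_Integration.integral_combine[where a=0 and c=s and b=t and f=W] goodW_int[OF g, where s=0 and t=t] assms by simp
  have i: "W integrable_on {s..t}" using goodW_int[OF g] assms by simp
  show "0 \<le> integral {s..t} W"
    by (rule integral_nonneg[OF i]) (use g assms in \<open>auto simp: goodW_def\<close>)
  have "integral {s..t} W \<le> integral {s..t} (\<lambda>x. W t)"
    apply (rule integral_le[OF i]) apply (simp add: integrable_const_ivl)
    using g assms unfolding goodW_def mono_on_def by auto
  then show "integral {s..t} W \<le> (t-s) * W t" using assms by simp
qed

lemma Z_mono_lip:
  assumes g: "goodW W" and q: "q \<ge> 0" and "0 \<le> s" "s \<le> t"
  shows "Zq q W s \<le> Zq q W t \<and> Zq q W t \<le> Zq q W s + q*(t-s)*W t"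
proof -
  note h = goodW_seg[OF assms(1,3,4)]
  have "q * integral {s..t} W \<le> q * ((t-s) * W t)" using h q by (intro mult_left_mono) auto
  then show ?thesis using h q unfolding Zq_def by (auto simp: algebra_simps)
qed

lemma Z_ge1:
  assumes g: "goodW W" and q: "q \<ge> 0"
  shows "1 \<le> Zq q W x"
proof (cases "x < 0")
  case True then show ?thesis by (simp add: Zq_def)
next
  case False
  then have "0 \<le> integral {0..x} W"
    using goodW_seg[OF g, where s=0 and t=x] by simp
  then show ?thesis using q by (simp add: Zq_def)
qed

lemma Z_cont: assumes g: "goodW W" shows "continuous_on {0..B} (Zq q W)"
  unfolding Zq_def
  by (intro continuous_intros indefinite_integral_continuous_1 goodW_int[OF g]) simp

lemma Z_int: assumes g: "goodW W" and "0 \<le> s" shows "(Zq q W) integrable_on {s..t}"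
proof -
  have "continuous_on {s..t} (Zq q W)"
    by (rule continuous_on_subset[OF Z_cont[OF g, where B=t]]) (use assms in auto)
  then show ?thesis by (rule integrable_continuous_real)
qed

lemma Zbar_seg:
  assumes g: "goodW W" and q: "q \<ge> 0" and "0 \<le> s" "s \<le> t"
  shows "(t - s) \<le> Zbar q W t - Zbar q W s \<and> Zbar q W t - Zbar q W s \<le> (t-s) * Zq q W t"
proof -
  have c: "integral {0..t} (Zq q W) = integral {0..s} (Zq q W) + integral {s..t} (Zq q W)"
    using Henstock_Kurzweil_Integration.integral_combine[where a=0 and c=s and b=t and f="Zq q W"] Z_int[OF g, where s=0 and t=t] assms by simp
  have i: "(Zq q W) integrable_on {s..t}" using Z_int[OF g] assms by simp
  have "integral {s..t} (\<lambda>x. 1) \<le> integral {s..t} (Zq q W)"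
    by (rule integral_le[OF _ i]) (use Z_ge1[OF g q] in \<open>auto simp: integrable_const_ivl\<close>)
  moreover have "integral {s..t} (Zq q W) \<le> integral {s..t} (\<lambda>x. Zq q W t)"
    by (rule integral_le[OF i]) (use Z_mono_lip[OF g q] assms in \<open>auto simp: integrable_const_ivl\<close>)
  ultimately show ?thesis using c assms by (simp add: Zbar_def)
qed

lemma Zbar_0: "Zbar q W 0 = 0" by (simp add: Zbar_def)




lemma lip_cont:
  fixes f :: "real \<Rightarrow> real"
  assumes "\<And>x y. x \<in> S \<Longrightarrow> y \<in> S \<Longrightarrow> f x - f y \<le> L * \<bar>x - y\<bar>" "0 \<le> L"
  shows "continuous_on S f"
proof (rule lipschitz_on_continuous_on)
  show "L-lipschitz_on S f"
  proof (rule lipschitz_onI)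
    fix x y assume "x \<in> S" "y \<in> S"
    then show "dist (f x) (f y) \<le> L * dist x y"
      using assms(1)[of x y] assms(1)[of y x] by (simp add: dist_real_def abs_le_iff abs_minus_commute)
  qed fact
qed

lemma select_exists:
  fixes G :: "real \<Rightarrow> real \<Rightarrow> real"
  assumes dec: "\<And>a b b'. 0 \<le> a \<Longrightarrow> a \<le> b \<Longrightarrow> b < b' \<Longrightarrow> G a b' < G a b"
    and lipb: "\<And>a b b'. 0 \<le> a \<Longrightarrow> a \<le> b \<Longrightarrow> b \<le> b' \<Longrightarrow> b' \<le> B \<Longrightarrow> G a b - G a b' \<le> L * (b' - b)"
    and lipa: "\<And>a a' b. 0 \<le> a' \<Longrightarrow> a' \<le> a \<Longrightarrow> a \<le> b \<Longrightarrow> b \<le> B \<Longrightarrow> \<bar>G a b - G a' b\<bar> \<le> L * (a - a')"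
    and L: "0 \<le> L"
    and pos: "G 0 0 > 0" and neg: "G 0 B < 0" and B: "0 \<le> B"
  shows "\<exists>b. b > 0 \<and> (\<exists>a\<in>{0..b}. G a b = 0) \<and> (\<forall>a\<in>{0..b}. G a b \<ge> 0)"
proof -
  have ca: "continuous_on {0..b} (\<lambda>a. G a b)" if "b \<le> B" for b
  proof (rule lip_cont[where L=L])
    fix x y assume xy: "x \<in> {0..b}" "y \<in> {0..b}"
    show "G x b - G y b \<le> L * \<bar>x - y\<bar>"
    proof (cases "y \<le> x")
      case True then show ?thesis using lipa[of y x b] xy that by (auto simp: abs_le_iff)
    next
      case False then show ?thesis using lipa[of x y b] xy that by (auto simp: abs_le_iff)
    qed
  qed (rule L)
  have "\<exists>a\<in>{0..b}. \<forall>a'\<in>{0..b}. G a b \<le> G a' b" if "0 \<le> b" "b \<le> B" for b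
    by (rule continuous_attains_inf) (use ca that in auto)
  then obtain am where am: "\<And>b. 0 \<le> b \<Longrightarrow> b \<le> B \<Longrightarrow> am b \<in> {0..b} \<and> (\<forall>a'\<in>{0..b}. G (am b) b \<le> G a' b)"
    by metis
  define \<phi> where "\<phi> b = G (am b) b" for b
  have phi_le: "\<phi> b \<le> G a b" if "0 \<le> a" "a \<le> b" "b \<le> B" for a b
    using am[of b] that unfolding \<phi>_def by auto
  have step: "\<phi> b' - \<phi> b \<le> (2*L) * \<bar>b' - b\<bar>" if "b \<in> {0..B}" "b' \<in> {0..B}" for b b'
  proof -
    define a where "a = am b"
    have a: "0 \<le> a" "a \<le> b" and pa: "\<phi> b = G a b" using am[of b] that by (auto simp: a_def \<phi>_def)
    show ?thesis
    proof (cases "b \<le> b'")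
      case True
      have "\<phi> b' \<le> G a b'" using phi_le[of a b'] a True that by auto
      also have "\<dots> \<le> G a b" using dec[of a b b'] a True by (cases "b = b'") auto
      finally show ?thesis using pa L by (smt (verit) mult_nonneg_nonneg abs_ge_zero)
    next
      case False
      show ?thesis
      proof (cases "a \<le> b'")
        case True
        have "\<phi> b' \<le> G a b'" using phi_le[of a b'] a True that by auto
        also have "\<dots> \<le> G a b + L * (b - b')" using lipb[of a b' b] a True False that by auto
        finally have "\<phi> b' - \<phi> b \<le> L * (b - b')" using pa by simp
        moreover have "L * (b - b') \<le> 2*L*(b-b')" using L False by simp
        ultimately show ?thesis using False by simp
      next
        case f2: False
        have "\<phi> b' \<le> G b' b'" using phi_le[of b' b'] that by auto
        also have "\<dots> \<le> G b' b + L * (b - b')" using lipb[of b' b' b] False that by auto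
        also have "G b' b \<le> G a b + L * (a - b')" using lipa[of b' a b] f2 a that by auto
        finally have "\<phi> b' \<le> G a b + L*(b-b') + L*(a-b')" by simp
        moreover have "L*(a-b') \<le> L*(b-b')" using a L by (intro mult_left_mono) auto
        ultimately have "\<phi> b' - \<phi> b \<le> L*(b-b') + L*(b-b')" using pa by simp
        then show ?thesis using False by (simp add: algebra_simps)
      qed
    qed
  qed
  have cphi: "continuous_on {0..B} (\<lambda>b. - \<phi> b)"
    by (rule lip_cont[where L="2*L"]) (use step L in \<open>auto simp: abs_minus_commute\<close>)
  have p0: "\<phi> 0 = G 0 0" using am[of 0] B unfolding \<phi>_def by auto
  have pB: "\<phi> B < 0" using phi_le[of 0 B] B neg by auto
  obtain b where b: "0 \<le> b" "b \<le> B" "- \<phi> b = 0"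
    using IVT'[of "\<lambda>b. - \<phi> b" 0 0 B] cphi p0 pB pos B by auto
  have "b \<noteq> 0" using b p0 pos by auto
  then show ?thesis using b am[of b] phi_le[of _ b] unfolding \<phi>_def
    by (intro exI[of _ b]) force
qed

lemma select_unique:
  fixes G :: "real \<Rightarrow> real \<Rightarrow> real"
  assumes dec: "\<And>a b b'. 0 \<le> a \<Longrightarrow> a \<le> b \<Longrightarrow> b < b' \<Longrightarrow> G a b' < G a b"
    and P1: "(\<exists>a\<in>{0..b1}. G a b1 = 0) \<and> (\<forall>a\<in>{0..b1}. G a b1 \<ge> 0)"
    and P2: "(\<exists>a\<in>{0..b2}. G a b2 = 0) \<and> (\<forall>a\<in>{0..b2}. G a b2 \<ge> 0)"
  shows "b1 = b2"
proof (rule ccontr)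
  assume "b1 \<noteq> b2"
  then consider "b1 < b2" | "b2 < b1" by linarith
  then show False
  proof cases
    case 1
    obtain a where "a \<in> {0..b1}" "G a b1 = 0" using P1 by auto
    then show False using dec[of a b1 b2] 1 P2 by force
  next
    case 2
    obtain a where "a \<in> {0..b2}" "G a b2 = 0" using P2 by auto
    then show False using dec[of a b2 b1] 2 P1 by force
  qed
qed




definition HH :: "(real \<Rightarrow> real) \<Rightarrow> (real \<Rightarrow> real) \<Rightarrow> real \<Rightarrow> real \<Rightarrow> real \<Rightarrow> real" where
  "HH WY WX q a b = integral {0..a} (\<lambda>u. WY u * Zq q WX (b-u))"

context
  fixes WY WX :: "real \<Rightarrow> real" and q :: real
  assumes gY: "goodW WY" and gX: "goodW WX" and q: "q > 0"
begin

lemma WY_mono: "0 \<le> x \<Longrightarrow> x \<le> y \<Longrightarrow> WY x \<le> WY y"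
  using gY unfolding goodW_def mono_on_def by auto
lemma WX_mono: "0 \<le> x \<Longrightarrow> x \<le> y \<Longrightarrow> WX x \<le> WX y"
  using gX unfolding goodW_def mono_on_def by auto
lemma WY_nn: "0 \<le> x \<Longrightarrow> 0 \<le> WY x" using gY unfolding goodW_def by auto
lemma WX_nn: "0 \<le> x \<Longrightarrow> 0 \<le> WX x" using gX unfolding goodW_def by auto

lemma integrand_cont:
  assumes "0 \<le> a" "a \<le> b"
  shows "continuous_on {0..a} (\<lambda>u. WY u * Zq q WX (b-u))"
proof (intro continuous_on_mult)
  show "continuous_on {0..a} WY"
    by (rule continuous_on_subset[of "{0..}"]) (use gY in \<open>auto simp: goodW_def\<close>)
  show "continuous_on {0..a} (\<lambda>u. Zq q WX (b - u))"
    by (rule continuous_on_compose2[OF Z_cont[OF gX, where B=b]]) (use assms in \<open>auto intro!: continuous_intros\<close>)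
qed

lemma integrand_int:
  assumes "0 \<le> a" "a \<le> b" and that: "0 \<le> c" "d \<le> a" shows "(\<lambda>u. WY u * Zq q WX (b-u)) integrable_on {c..d}"
proof (cases "c \<le> d")
  case True
  show ?thesis
    by (rule integrable_continuous_real, rule continuous_on_subset[OF integrand_cont[OF assms(1,2)]]) (use that in auto)
next
  case False then show ?thesis by (simp add: integrable_on_empty)
qed

lemma G_eq:
  assumes "0 \<le> a" "a \<le> b"
  shows "integral {b-a..b} (\<lambda>y. WY (b-y) * Zq q WX y) = HH WY WX q a b"
proof -
  have "integral {b-a..b} (\<lambda>y. WY (b-y) * Zq q WX y) = integral {-b..-(b-a)} (\<lambda>x. WY (b+x) * Zq q WX (-x))"
    using Henstock_Kurzweil_Integration.integral_reflect_real[of b "b-a" "\<lambda>y. WY (b-y) * Zq q WX y"] by simp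
  also have "\<dots> = integral {0-b..a-b} (\<lambda>x. (\<lambda>u. WY u * Zq q WX (b-u)) (x + b))"
    by (simp add: add.commute)
  also have "\<dots> = integral {0..a} (\<lambda>u. WY u * Zq q WX (b-u))"
    by (rule integral_shift_real_ivl)
  finally show ?thesis by (simp add: HH_def)
qed

lemma H_split:
  assumes "0 \<le> a'" "a' \<le> a" "a \<le> b"
  shows "HH WY WX q a b = HH WY WX q a' b + integral {a'..a} (\<lambda>u. WY u * Zq q WX (b-u))"
  unfolding HH_def
  using Henstock_Kurzweil_Integration.integral_combine[where a=0 and c=a' and b=a and f="\<lambda>u. WY u * Zq q WX (b-u)"]
    integrand_int[of a b 0 a] assms by auto

lemma piece_bounds:
  assumes "0 \<le> c" "c \<le> d" "d \<le> b"
  shows "0 \<le> integral {c..d} (\<lambda>u. WY u * Zq q WX (b-u))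
       \<and> integral {c..d} (\<lambda>u. WY u * Zq q WX (b-u)) \<le> (d - c) * (WY d * Zq q WX b)"
proof
  have i: "(\<lambda>u. WY u * Zq q WX (b-u)) integrable_on {c..d}" using integrand_int[of d b c d] assms by auto
  show "0 \<le> integral {c..d} (\<lambda>u. WY u * Zq q WX (b-u))"
    by (rule integral_nonneg[OF i]) (use assms WY_nn order_trans[OF zero_le_one Z_ge1[OF gX, of q]] q in \<open>auto intro!: mult_nonneg_nonneg\<close>)
  have "integral {c..d} (\<lambda>u. WY u * Zq q WX (b-u)) \<le> integral {c..d} (\<lambda>u. WY d * Zq q WX b)"
  proof (rule integral_le[OF i])
    fix u assume u: "u \<in> {c..d}"
    show "WY u * Zq q WX (b - u) \<le> WY d * Zq q WX b"
      apply (rule mult_mono)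
      using u assms WY_mono WY_nn Z_mono_lip[OF gX, of q "b-u" b] q order_trans[OF zero_le_one Z_ge1[OF gX, of q]] by auto
  qed (simp add: integrable_const_ivl)
  then show "integral {c..d} (\<lambda>u. WY u * Zq q WX (b-u)) \<le> (d - c) * (WY d * Zq q WX b)"
    using assms by (simp add: mult_ac)
qed

lemma H_nonneg: "0 \<le> a \<Longrightarrow> a \<le> b \<Longrightarrow> 0 \<le> HH WY WX q a b"
  using piece_bounds[of 0 a b] by (simp add: HH_def)

lemma H_ub: assumes "0 \<le> a" "a \<le> b"
  shows "HH WY WX q a b \<le> Zq q WX b * integral {0..a} WY"
proof -
  have i: "(\<lambda>u. WY u * Zq q WX (b-u)) integrable_on {0..a}" using integrand_int[of a b 0 a] assms by auto
  have "HH WY WX q a b \<le> integral {0..a} (\<lambda>u. Zq q WX b * WY u)"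
    unfolding HH_def
  proof (rule integral_le[OF i])
    show "(\<lambda>u. Zq q WX b * WY u) integrable_on {0..a}"
      using integrable_on_cmult_left[OF goodW_int[OF gY, where s=0 and t=a], of "Zq q WX b"] by simp
    fix u assume u: "u \<in> {0..a}"
    show "WY u * Zq q WX (b - u) \<le> Zq q WX b * WY u"
      using mult_left_mono[of "Zq q WX (b-u)" "Zq q WX b" "WY u"] u assms WY_nn Z_mono_lip[OF gX, of q "b-u" b] q
      by (auto simp: mult.commute)
  qed
  also have "\<dots> = Zq q WX b * integral {0..a} WY" by simp
  finally show ?thesis .
qed

lemma H_lip_a:
  assumes "0 \<le> a'" "a' \<le> a" "a \<le> b"
  shows "0 \<le> HH WY WX q a b - HH WY WX q a' b \<and> HH WY WX q a b - HH WY WX q a' b \<le> (a - a') * (WY a * Zq q WX b)"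
  using H_split[OF assms] piece_bounds[of a' a b] assms by auto

lemma H_diff_b:
  assumes "0 \<le> a" "a \<le> b" "b \<le> b'"
  shows "0 \<le> HH WY WX q a b' - HH WY WX q a b \<and> HH WY WX q a b' - HH WY WX q a b \<le> a * (WY a * (q * (b'-b) * WX b'))"
proof -
  have i1: "(\<lambda>u. WY u * Zq q WX (b'-u)) integrable_on {0..a}" using integrand_int[of a b' 0 a] assms by auto
  have i2: "(\<lambda>u. WY u * Zq q WX (b-u)) integrable_on {0..a}" using integrand_int[of a b 0 a] assms by auto
  have eq: "HH WY WX q a b' - HH WY WX q a b = integral {0..a} (\<lambda>u. WY u * Zq q WX (b'-u) - WY u * Zq q WX (b-u))"
    unfolding HH_def using integral_diff[OF i1 i2] by simp
  have id: "(\<lambda>u. WY u * Zq q WX (b'-u) - WY u * Zq q WX (b-u)) integrable_on {0..a}"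
    using integrable_diff[OF i1 i2] by simp
  have pt: "0 \<le> WY u * Zq q WX (b'-u) - WY u * Zq q WX (b-u) \<and>
      WY u * Zq q WX (b'-u) - WY u * Zq q WX (b-u) \<le> WY a * (q * (b'-b) * WX b')" if u: "u \<in> {0..a}" for u
  proof -
    have z: "Zq q WX (b-u) \<le> Zq q WX (b'-u) \<and> Zq q WX (b'-u) \<le> Zq q WX (b-u) + q*((b'-u)-(b-u))*WX (b'-u)"
      using Z_mono_lip[OF gX, of q "b-u" "b'-u"] q u assms by auto
    have w: "WX (b'-u) \<le> WX b'" using WX_mono u assms by auto
    have e: "WY u * Zq q WX (b'-u) - WY u * Zq q WX (b-u) = WY u * (Zq q WX (b'-u) - Zq q WX (b-u))"
      by (simp add: algebra_simps)
    have "Zq q WX (b'-u) - Zq q WX (b-u) \<le> q * (b'-b) * WX b'"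
    proof -
      have "q*((b'-u)-(b-u))*WX (b'-u) = (q*(b'-b))*WX (b'-u)" by simp
      also have "\<dots> \<le> (q * (b'-b)) * WX b'"
        using w q assms by (intro mult_left_mono) auto
      finally have "q*((b'-u)-(b-u))*WX (b'-u) \<le> q * (b'-b) * WX b'" .
      then show ?thesis using z by linarith
    qed
    moreover have "0 \<le> Zq q WX (b'-u) - Zq q WX (b-u)" using z by simp
    ultimately show ?thesis unfolding e
      using WY_nn[of u] WY_mono[of u a] u by (auto intro: mult_mono mult_nonneg_nonneg)
  qed
  have "0 \<le> integral {0..a} (\<lambda>u. WY u * Zq q WX (b'-u) - WY u * Zq q WX (b-u))"
    by (rule integral_nonneg[OF id]) (use pt in auto)
  moreover have "integral {0..a} (\<lambda>u. WY u * Zq q WX (b'-u) - WY u * Zq q WX (b-u)) \<le> integral {0..a} (\<lambda>u. WY a * (q * (b'-b) * WX b'))"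
    by (rule integral_le[OF id]) (use pt in \<open>auto simp: integrable_const_ivl\<close>)
  ultimately show ?thesis unfolding eq using assms by (simp add: mult_ac)
qed

end



context
  fixes WY WX :: "real \<Rightarrow> real" and q \<delta> \<beta> \<rho> dX :: real
  assumes gY: "goodW WY" and gX: "goodW WX" and q: "q > 0"
    and d: "\<delta> > 0" and b0: "0 < \<beta>" and b1: "\<beta> < 1"
begin

abbreviation "\<Gamma> \<equiv> Gam q \<rho> \<beta> \<delta> WY WX dX"

lemma Gam_form: assumes "0 \<le> a" "a \<le> b"
  shows "\<Gamma> a b = \<delta> * Zq q WY a - q*\<rho> - q*\<beta>*(Zbar q WX b + dX/q + \<delta> * HH WY WX q a b)"
  unfolding Gam_def rtilde_def Rq_def using G_eq[OF gY gX q assms] by simp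

lemma Gam_dec: assumes "0 \<le> a" "a \<le> b" "b < b'" shows "\<Gamma> a b' < \<Gamma> a b"
proof -
  have z: "b' - b \<le> Zbar q WX b' - Zbar q WX b" using Zbar_seg[OF gX, of q b b'] q assms by auto
  have h: "0 \<le> HH WY WX q a b' - HH WY WX q a b" using H_diff_b[OF gY gX q, of a b b'] assms by auto
  have "0 < (Zbar q WX b' - Zbar q WX b) + \<delta> * (HH WY WX q a b' - HH WY WX q a b)"
    using z h d assms by (smt (verit) mult_nonneg_nonneg)
  then have "0 < q*\<beta>*((Zbar q WX b' - Zbar q WX b) + \<delta> * (HH WY WX q a b' - HH WY WX q a b))"
    using q b0 by simp
  then show ?thesis using Gam_form[of a b] Gam_form[of a b'] assms by (simp add: algebra_simps)
qed

lemma Gam_lipb: assumes "0 \<le> a" "a \<le> b" "b \<le> b'" "b' \<le> B"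
  shows "\<Gamma> a b - \<Gamma> a b' \<le> (q*\<beta>*(Zq q WX B + \<delta>*(B*(WY B*(q*WX B))))) * (b'-b)"
proof -
  have z: "Zbar q WX b' - Zbar q WX b \<le> (b'-b) * Zq q WX b'" using Zbar_seg[OF gX, of q b b'] q assms by auto
  have z2: "Zq q WX b' \<le> Zq q WX B" using Z_mono_lip[OF gX, of q b' B] q assms by auto
  have h: "HH WY WX q a b' - HH WY WX q a b \<le> a * (WY a * (q * (b'-b) * WX b'))"
    using H_diff_b[OF gY gX q, of a b b'] assms by auto
  have h2: "a * (WY a * (q * (b'-b) * WX b')) \<le> B * (WY B * (q * (b'-b) * WX B))"
    using assms q WY_nn[OF gY gX q] WX_nn[OF gY gX q] WY_mono[OF gY gX q, of a B] WX_mono[OF gY gX q, of b' B]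
    by (intro mult_mono mult_nonneg_nonneg) auto
  have "\<Gamma> a b - \<Gamma> a b' = q*\<beta>*((Zbar q WX b' - Zbar q WX b) + \<delta> * (HH WY WX q a b' - HH WY WX q a b))"
    using Gam_form[of a b] Gam_form[of a b'] assms by (simp add: algebra_simps)
  also have "\<dots> \<le> q*\<beta>*((b'-b) * Zq q WX B + \<delta> * (B * (WY B * (q * (b'-b) * WX B))))"
  proof -
    have "(b'-b) * Zq q WX b' \<le> (b'-b) * Zq q WX B" using z2 assms by (intro mult_left_mono) auto
    moreover have "\<delta> * (HH WY WX q a b' - HH WY WX q a b) \<le> \<delta> * (B * (WY B * (q * (b'-b) * WX B)))"
      using h h2 d by (intro mult_left_mono) auto
    ultimately show ?thesis using z q b0 by (intro mult_left_mono) auto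
  qed
  also have "\<dots> = (q*\<beta>*(Zq q WX B + \<delta>*(B*(WY B*(q*WX B))))) * (b'-b)" by (simp add: algebra_simps)
  finally show ?thesis .
qed

lemma Gam_lipa: assumes "0 \<le> a'" "a' \<le> a" "a \<le> b" "b \<le> B"
  shows "\<bar>\<Gamma> a b - \<Gamma> a' b\<bar> \<le> (\<delta>*q*WY B + q*\<beta>*\<delta>*(WY B*Zq q WX B)) * (a-a')"
proof -
  have zy: "0 \<le> Zq q WY a - Zq q WY a' \<and> Zq q WY a - Zq q WY a' \<le> q*(a-a')*WY a"
    using Z_mono_lip[OF gY, of q a' a] q assms by auto
  have hh: "0 \<le> HH WY WX q a b - HH WY WX q a' b \<and> HH WY WX q a b - HH WY WX q a' b \<le> (a - a') * (WY a * Zq q WX b)"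
    using H_lip_a[OF gY gX q, of a' a b] assms by auto
  define u where "u = \<delta> * (Zq q WY a - Zq q WY a')"
  define v where "v = q*\<beta>*\<delta>*(HH WY WX q a b - HH WY WX q a' b)"
  have e: "\<Gamma> a b - \<Gamma> a' b = u - v"
    using Gam_form[of a b] Gam_form[of a' b] assms by (simp add: u_def v_def algebra_simps)
  have u0: "0 \<le> u" using zy d by (simp add: u_def)
  have v0: "0 \<le> v" using hh d q b0 by (simp add: v_def)
  have u1: "u \<le> \<delta>*q*WY B * (a-a')"
  proof -
    have "q*(a-a')*WY a \<le> q*(a-a')*WY B" using WY_mono[OF gY gX q, of a B] assms q by (intro mult_left_mono) auto
    then have "u \<le> \<delta> * (q*(a-a')*WY B)" unfolding u_def using zy d by (intro mult_left_mono) auto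
    then show ?thesis by (simp add: algebra_simps)
  qed
  have v1: "v \<le> q*\<beta>*\<delta>*(WY B*Zq q WX B) * (a-a')"
  proof -
    have "WY a * Zq q WX b \<le> WY B * Zq q WX B"
      using WY_mono[OF gY gX q, of a B] WY_nn[OF gY gX q, of a] Z_mono_lip[OF gX, of q b B] q assms
        order_trans[OF zero_le_one Z_ge1[OF gX, of q]]
      by (intro mult_mono) auto
    then have "(a - a') * (WY a * Zq q WX b) \<le> (a-a') * (WY B * Zq q WX B)" using assms by (intro mult_left_mono) auto
    then have "HH WY WX q a b - HH WY WX q a' b \<le> (a-a') * (WY B * Zq q WX B)" using hh by linarith
    then have "v \<le> q*\<beta>*\<delta>*((a-a') * (WY B * Zq q WX B))" unfolding v_def using q b0 d
      by (intro mult_left_mono) auto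
    then show ?thesis by (simp add: algebra_simps)
  qed
  have "\<bar>u - v\<bar> \<le> \<delta>*q*WY B * (a-a') + q*\<beta>*\<delta>*(WY B*Zq q WX B) * (a-a')"
    using u0 v0 u1 v1 by (smt (verit) mult_nonneg_nonneg)
  then show ?thesis unfolding e by (simp add: algebra_simps)
qed

lemma Gam_zero_b: assumes "0 \<le> b" shows "\<Gamma> 0 b = \<delta> - q*\<rho> - q*\<beta>*(Zbar q WX b + dX/q)"
  using Gam_form[of 0 b] assms by (simp add: HH_def Zq_def)

lemma Gam_lower: assumes "0 \<le> a" "a \<le> b" "b \<le> B" and bz: "\<beta> * Zq q WX B \<le> 1"
  shows "\<delta> - q*\<rho> - q*B - \<beta>*dX \<le> \<Gamma> a b"
proof -
  define I where "I = integral {0..a} WY"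
  have I0: "0 \<le> I" using goodW_seg[OF gY, where s=0 and t=a] assms by (simp add: I_def)
  have zy: "Zq q WY a = 1 + q*I" by (simp add: Zq_def I_def)
  have h: "HH WY WX q a b \<le> Zq q WX B * I"
  proof -
    have "HH WY WX q a b \<le> Zq q WX b * I" using H_ub[OF gY gX q, of a b] assms by (simp add: I_def)
    also have "\<dots> \<le> Zq q WX B * I" using Z_mono_lip[OF gX, of q b B] q assms I0 by (intro mult_right_mono) auto
    finally show ?thesis .
  qed
  have zb: "Zbar q WX b \<le> B * Zq q WX B"
  proof -
    have "Zbar q WX b \<le> b * Zq q WX b" using Zbar_seg[OF gX, of q 0 b] q assms by (simp add: Zbar_0)
    also have "\<dots> \<le> B * Zq q WX B" using Z_mono_lip[OF gX, of q b B] q assms order_trans[OF zero_le_one Z_ge1[OF gX, of q]]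
      by (intro mult_mono) auto
    finally show ?thesis .
  qed
  have t1: "q*\<beta>*\<delta>*HH WY WX q a b \<le> q*\<delta>*I"
  proof -
    have "q*\<beta>*\<delta>*HH WY WX q a b \<le> q*\<delta>*(\<beta>*(Zq q WX B * I))"
      using h q d b0 mult_left_mono[OF h, of "q*\<beta>*\<delta>"] by (simp add: algebra_simps)
    also have "\<dots> \<le> q*\<delta>*(1*I)"
    proof -
      have "\<beta>*(Zq q WX B * I) = (\<beta>*Zq q WX B) * I" by simp
      also have "\<dots> \<le> 1 * I" using bz I0 by (intro mult_right_mono) auto
      finally show ?thesis using q d by (intro mult_left_mono) auto
    qed
    finally show ?thesis by simp
  qed
  have t2: "q*\<beta>*Zbar q WX b \<le> q*B"
  proof -
    have "q*\<beta>*Zbar q WX b \<le> q*(\<beta>*(B*Zq q WX B))" using zb q b0 mult_left_mono[OF zb, of "q*\<beta>"] by (simp add: algebra_simps)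
    also have "\<dots> = q*(B*(\<beta>*Zq q WX B))" by (simp add: algebra_simps)
    also have "\<dots> \<le> q*(B*1)" using bz q assms by (intro mult_left_mono) auto
    finally show ?thesis by simp
  qed
  have "\<Gamma> a b = \<delta> + \<delta>*q*I - q*\<rho> - q*\<beta>*Zbar q WX b - \<beta>*dX - q*\<beta>*\<delta>*HH WY WX q a b"
    using Gam_form[OF assms(1,2)] zy q by (simp add: algebra_simps)
  then show ?thesis using t1 t2 by (simp add: algebra_simps)
qed

lemma sel_main:
  assumes B0: "0 \<le> B0" and hpos: "\<And>a b. 0 \<le> a \<Longrightarrow> a \<le> b \<Longrightarrow> b \<le> B0 \<Longrightarrow> \<Gamma> a b > 0"
  shows "selected_b q \<rho> \<beta> \<delta> WY WX dX > B0"
proof -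
  define P where "P b \<longleftrightarrow> b > 0 \<and> (\<exists>a\<in>{0..b}. \<Gamma> a b = 0) \<and> (\<forall>a\<in>{0..b}. \<Gamma> a b \<ge> 0)" for b
  have g00: "\<Gamma> 0 0 > 0" using hpos[of 0 0] B0 by auto
  define Bn where "Bn = max 0 ((\<delta> - q*\<rho> - \<beta>*dX)/(q*\<beta>) + 1)"
  have Bn0: "0 \<le> Bn" by (simp add: Bn_def)
  have neg: "\<Gamma> 0 Bn < 0"
  proof -
    have zb: "Bn \<le> Zbar q WX Bn" using Zbar_seg[OF gX, of q 0 Bn] q Bn0 by (simp add: Zbar_0)
    have qb: "0 < q*\<beta>" using q b0 by simp
    have "(\<delta> - q*\<rho> - \<beta>*dX)/(q*\<beta>) < Bn" by (simp add: Bn_def)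
    then have "\<delta> - q*\<rho> - \<beta>*dX < q*\<beta>*Bn" using qb by (simp add: divide_less_eq mult.commute)
    also have "\<dots> \<le> q*\<beta>*Zbar q WX Bn" using zb qb by (intro mult_left_mono) auto
    finally show ?thesis using Gam_zero_b[OF Bn0] q by (simp add: algebra_simps)
  qed
  define L where "L = max (q*\<beta>*(Zq q WX Bn + \<delta>*(Bn*(WY Bn*(q*WX Bn))))) (\<delta>*q*WY Bn + q*\<beta>*\<delta>*(WY Bn*Zq q WX Bn))"
  have L0: "0 \<le> L" unfolding L_def using q b0 d WY_nn[OF gY gX q Bn0] order_trans[OF zero_le_one Z_ge1[OF gX, of q]]
    by (intro max.coboundedI2) (auto intro!: add_nonneg_nonneg mult_nonneg_nonneg)
  have ex: "\<exists>b. P b" unfolding P_def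
  proof (rule select_exists[where B=Bn and L=L])
    fix a b b' assume "0 \<le> a" "a \<le> b" "b \<le> b'" "b' \<le> Bn"
    then show "\<Gamma> a b - \<Gamma> a b' \<le> L * (b' - b)"
      using Gam_lipb[of a b b' Bn] mult_right_mono[of _ L "b'-b"] unfolding L_def
      by (smt (verit) max.cobounded1 mult_right_mono)
  next
    fix a a' b assume "0 \<le> a'" "a' \<le> a" "a \<le> b" "b \<le> Bn"
    then show "\<bar>\<Gamma> a b - \<Gamma> a' b\<bar> \<le> L * (a - a')"
      using Gam_lipa[of a' a b Bn] unfolding L_def
      by (smt (verit) max.cobounded2 mult_right_mono)
  qed (use Gam_dec L0 g00 neg Bn0 in auto)
  have un: "\<And>b1 b2. P b1 \<Longrightarrow> P b2 \<Longrightarrow> b1 = b2"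
    unfolding P_def using select_unique[of \<Gamma>] Gam_dec by blast
  have sel: "selected_b q \<rho> \<beta> \<delta> WY WX dX = (THE b. P b)"
    using g00 unfolding selected_b_def P_def Let_def by simp
  have "P (THE b. P b)" using ex un by (metis theI)
  then obtain a where a: "a \<in> {0..(THE b. P b)}" "\<Gamma> a (THE b. P b) = 0" unfolding P_def by auto
  show ?thesis
  proof (rule ccontr)
    assume "\<not> ?thesis"
    then show False using hpos[of a "THE b. P b"] a sel by auto
  qed
qed

end



lemma scale_basic:
  assumes "is_scale_fun \<psi> q W"
  shows "(\<forall>x<0. W x = 0) \<and> continuous_on {0..} W \<and> mono_on {0..} W"
  using assms unfolding is_scale_fun_def
  by (auto intro: strict_mono_on_imp_mono_on)

lemma scale_bound:
  assumes sc: "is_scale_fun \<psi> q W" and nn: "\<And>x. 0 \<le> x \<Longrightarrow> 0 \<le> W x"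
    and th: "\<theta> > 0" "\<psi> \<theta> > q" and x: "0 \<le> x"
  shows "W x \<le> exp (\<theta>*(x+1)) / (\<psi> \<theta> - q)"
proof -
  have mono: "mono_on {0..} W" using scale_basic[OF sc] by auto
  have si: "set_integrable lborel {0..} (\<lambda>y. exp (- \<theta> * y) * W y)"
    and lt: "(LINT y:{0..}|lborel. exp (- \<theta> * y) * W y) = 1 / (\<psi> \<theta> - q)"
    using sc th unfolding is_scale_fun_def by auto
  have i1: "integrable lborel (\<lambda>y. indicator {0..} y * (exp (- \<theta> * y) * W y))"
    using si unfolding set_integrable_def by simp
  have i2: "integrable lborel (\<lambda>y. indicator {x..x+1} y * (W x * exp (- \<theta> * (x+1))))"
    by (intro integrable_mult_left) simp
  have "(LINT y|lborel. indicator {x..x+1} y * (W x * exp (- \<theta> * (x+1)))) \<le>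
        (LINT y|lborel. indicator {0..} y * (exp (- \<theta> * y) * W y))"
  proof (rule integral_mono[OF i2 i1])
    fix y
    show "indicator {x..x+1} y * (W x * exp (- \<theta> * (x+1))) \<le> indicator {0..} y * (exp (- \<theta> * y) * W y)"
    proof (cases "y \<in> {x..x+1}")
      case True
      have "W x \<le> W y" using mono True x unfolding mono_on_def by auto
      moreover have "exp (- \<theta> * (x+1)) \<le> exp (- \<theta> * y)" using True th by auto
      ultimately have "W x * exp (- \<theta> * (x+1)) \<le> exp (- \<theta> * y) * W y"
        using nn[OF x] by (simp add: mult.commute mult_mono)
      then show ?thesis using True x by auto
    next
      case False
      then show ?thesis using nn by (auto simp: indicator_def)
    qed
  qed
  then have "W x * exp (- \<theta> * (x+1)) \<le> 1 / (\<psi> \<theta> - q)"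
    using lt unfolding set_lebesgue_integral_def by simp
  then have "(W x * exp (- \<theta> * (x+1))) * exp (\<theta>*(x+1)) \<le> 1 / (\<psi> \<theta> - q) * exp (\<theta>*(x+1))"
    by (intro mult_right_mono) auto
  moreover have "(W x * exp (- \<theta> * (x+1))) * exp (\<theta>*(x+1)) = W x"
  proof -
    have "exp (- \<theta> * (x+1)) * exp (\<theta>*(x+1)) = 1" by (simp add: exp_minus)
    then show ?thesis by (simp add: mult.assoc)
  qed
  ultimately have "W x \<le> 1 / (\<psi> \<theta> - q) * exp (\<theta>*(x+1))" by linarith
  then show ?thesis by simp
qed

lemma scale_nonneg:
  assumes sc: "is_scale_fun \<psi> q W" and unb: "\<And>T. \<exists>\<theta>>T. \<psi> \<theta> > q"
    and x0: "0 \<le> x0"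
  shows "0 \<le> W x0"
proof (rule ccontr)
  assume neg0: "\<not> 0 \<le> W x0"
  have mono: "mono_on {0..} W" and cont: "continuous_on {0..} W" using scale_basic[OF sc] by auto
  have W0: "W 0 < 0" using neg0 mono x0 unfolding mono_on_def by fastforce
  have "\<forall>e>0. \<exists>d>0. \<forall>x'\<in>{0..}. dist x' 0 < d \<longrightarrow> dist (W x') (W 0) < e"
    using bspec[OF cont[unfolded continuous_on_iff], of 0] by simp
  then obtain d where d: "d > 0" "\<And>x'. x' \<in> {0..} \<Longrightarrow> dist x' 0 < d \<Longrightarrow> dist (W x') (W 0) < - W 0 / 2"
    using W0 by (metis divide_pos_pos neg_0_less_iff_less zero_less_numeral)
  define \<eta> where "\<eta> = d/2"
  have eta: "\<eta> > 0" using d by (simp add: \<eta>_def)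
  define w where "w = W \<eta>"
  have w: "w < 0"
  proof -
    have "\<bar>W \<eta> - W 0\<bar> < - W 0 / 2" using d(2)[of \<eta>] d unfolding \<eta>_def by (auto simp: dist_real_def)
    then show ?thesis using W0 unfolding w_def by linarith
  qed
  have wle: "W y \<le> w" if "0 \<le> y" "y \<le> \<eta>" for y using mono that eta unfolding mono_on_def w_def by auto
  obtain \<theta>0 where t0: "\<theta>0 > 0" "\<psi> \<theta>0 > q" using unb[of 0] by auto
  have si0: "set_integrable lborel {0..} (\<lambda>y. exp (- \<theta>0 * y) * W y)"
    using sc t0 unfolding is_scale_fun_def by auto
  define C where "C = (LINT y|lborel. indicator {0..} y * \<bar>exp (- \<theta>0 * y) * W y\<bar>)"
  have iC: "integrable lborel (\<lambda>y. indicator {0..} y * \<bar>exp (- \<theta>0 * y) * W y\<bar>)"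
  proof -
    have "integrable lborel (\<lambda>y. \<bar>indicator {0..} y * (exp (- \<theta>0 * y) * W y)\<bar>)"
      using integrable_abs[OF si0[unfolded set_integrable_def]] by simp
    then show ?thesis by (simp add: abs_mult)
  qed
  have "((\<lambda>\<theta>::real. \<theta> * exp(-(\<theta>-\<theta>0)*\<eta>)) \<longlongrightarrow> 0) at_top" using eta by real_asymp
  then have "((\<lambda>\<theta>::real. \<bar>\<theta> * exp(-(\<theta>-\<theta>0)*\<eta>) * C\<bar>) \<longlongrightarrow> 0) at_top"
    by (intro tendsto_rabs_zero tendsto_mult_left_zero)
  then have ev: "eventually (\<lambda>\<theta>. \<bar>\<theta> * exp(-(\<theta>-\<theta>0)*\<eta>) * C\<bar> < - w * exp (-1)) at_top"
    using w by (intro order_tendstoD(2)) (auto simp: mult_neg_pos)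
  then obtain T1 where T1: "\<And>\<theta>. \<theta> \<ge> T1 \<Longrightarrow> \<bar>\<theta> * exp(-(\<theta>-\<theta>0)*\<eta>) * C\<bar> < - w * exp (-1)"
    unfolding eventually_at_top_linorder by auto
  obtain \<theta> where th: "\<theta> > max T1 (max \<theta>0 (1/\<eta>))" "\<psi> \<theta> > q" using unb by blast
  have thp: "\<theta> > 0" "\<theta> \<ge> \<theta>0" "1/\<theta> < \<eta>" using th t0 eta by (auto simp: field_simps)
  have si: "set_integrable lborel {0..} (\<lambda>y. exp (- \<theta> * y) * W y)"
    and lt: "(LINT y:{0..}|lborel. exp (- \<theta> * y) * W y) = 1 / (\<psi> \<theta> - q)"
    using sc th thp unfolding is_scale_fun_def by auto
  have i1: "integrable lborel (\<lambda>y. indicator {0..} y * (exp (- \<theta> * y) * W y))"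
    using si unfolding set_integrable_def by simp
  have ia: "integrable lborel (\<lambda>y. indicator {0..1/\<theta>} y * (w * exp (-1)))"
    using thp by (simp add: integrable_indicator_iff)
  have ib: "integrable lborel (\<lambda>y. exp(-(\<theta>-\<theta>0)*\<eta>) * (indicator {0..} y * \<bar>exp (- \<theta>0 * y) * W y\<bar>))"
    using iC by simp
  have i2: "integrable lborel (\<lambda>y. indicator {0..1/\<theta>} y * (w * exp (-1)) + exp(-(\<theta>-\<theta>0)*\<eta>) * (indicator {0..} y * \<bar>exp (- \<theta>0 * y) * W y\<bar>))"
    using ia ib by (rule Bochner_Integration.integrable_add)
  have "(LINT y|lborel. indicator {0..} y * (exp (- \<theta> * y) * W y)) \<le>
        (LINT y|lborel. indicator {0..1/\<theta>} y * (w * exp (-1)) + exp(-(\<theta>-\<theta>0)*\<eta>) * (indicator {0..} y * \<bar>exp (- \<theta>0 * y) * W y\<bar>))"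
  proof (rule integral_mono[OF i1 i2])
    fix y
    have p2: "0 \<le> exp(-(\<theta>-\<theta>0)*\<eta>) * (indicator {0..} y * \<bar>exp (- \<theta>0 * y) * W y\<bar>)" by simp
    show "indicator {0..} y * (exp (- \<theta> * y) * W y) \<le> indicator {0..1/\<theta>} y * (w * exp (-1)) + exp(-(\<theta>-\<theta>0)*\<eta>) * (indicator {0..} y * \<bar>exp (- \<theta>0 * y) * W y\<bar>)"
    proof (cases "y < 0")
      case True then show ?thesis using p2 by (simp add: indicator_def)
    next
      case False
      show ?thesis
      proof (cases "y \<le> 1/\<theta>")
        case True
        have Wy: "W y \<le> w" using wle[of y] False True thp by auto
        have e: "exp (-1) \<le> exp (- \<theta> * y)" using True thp by (simp add: field_simps)
        have "exp (- \<theta> * y) * W y \<le> exp (-1) * W y"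
          using e Wy w by (intro mult_right_mono_neg) auto
        also have "\<dots> \<le> exp (-1) * w" using Wy by simp
        finally have k: "exp (- \<theta> * y) * W y \<le> w * exp (-1)" by (simp add: mult.commute)
        have L: "indicator {0..} y * (exp (- \<theta> * y) * W y) = exp (- \<theta> * y) * W y" using False by simp
        have R: "indicator {0..1/\<theta>} y * (w * exp (-1)) = w * exp (-1)" using True False by simp
        show ?thesis unfolding L R using k p2 by linarith
      next
        case f2: False
        show ?thesis
        proof (cases "W y \<le> 0")
          case True
          then have "exp (- \<theta> * y) * W y \<le> 0" by (simp add: mult_nonneg_nonpos)
          moreover have L: "indicator {0..} y * (exp (- \<theta> * y) * W y) = exp (- \<theta> * y) * W y" using False by simp
          moreover have R: "indicator {0..1/\<theta>} y * (w * exp (-1)) = 0" using f2 by simp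
          ultimately show ?thesis using p2 by linarith
        next
          case Wp: False
          then have yeta: "y > \<eta>" using wle[of y] w False by fastforce
          have "exp (- \<theta> * y) * W y = exp(-(\<theta>-\<theta>0)*y) * (exp (- \<theta>0 * y) * W y)"
          proof -
            have "exp (- \<theta> * y) = exp(-(\<theta>-\<theta>0)*y) * exp (- \<theta>0 * y)"
              by (simp add: mult_exp_exp algebra_simps)
            then show ?thesis by simp
          qed
          also have "\<dots> \<le> exp(-(\<theta>-\<theta>0)*\<eta>) * \<bar>exp (- \<theta>0 * y) * W y\<bar>"
          proof (rule mult_mono)
            show "exp(-(\<theta>-\<theta>0)*y) \<le> exp(-(\<theta>-\<theta>0)*\<eta>)" using yeta thp by (simp add: mult_left_mono_neg)
            show "exp (- \<theta>0 * y) * W y \<le> \<bar>exp (- \<theta>0 * y) * W y\<bar>" by simp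
            show "0 \<le> exp(-(\<theta>-\<theta>0)*\<eta>)" by simp
            show "0 \<le> exp (- \<theta>0 * y) * W y" using Wp by simp
          qed
          finally show ?thesis using f2 False by (simp add: indicator_def)
        qed
      qed
    qed
  qed
  also have "\<dots> = w * exp (-1) * (1/\<theta>) + exp(-(\<theta>-\<theta>0)*\<eta>) * C"
    using thp unfolding C_def Bochner_Integration.integral_add[OF ia ib] by simp
  finally have le: "1 / (\<psi> \<theta> - q) \<le> w * exp (-1) * (1/\<theta>) + exp(-(\<theta>-\<theta>0)*\<eta>) * C"
    using lt unfolding set_lebesgue_integral_def by simp
  have "\<theta> * exp(-(\<theta>-\<theta>0)*\<eta>) * C < - w * exp (-1)" using T1[of \<theta>] th by auto
  then have "exp(-(\<theta>-\<theta>0)*\<eta>) * C < - w * exp (-1) * (1/\<theta>)" using thp by (simp add: field_simps)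
  then have "1 / (\<psi> \<theta> - q) < 0" using le by linarith
  then show False using th by (simp add: divide_less_0_iff)
qed

lemma scale_good:
  assumes sc: "is_scale_fun \<psi> q W" and unb: "\<And>T. \<exists>\<theta>>T. \<psi> \<theta> > q"
  shows "goodW W"
  using scale_basic[OF sc] scale_nonneg[OF sc unb] unfolding goodW_def by auto




definition fL :: "real \<Rightarrow> real \<Rightarrow> real" where
  "fL \<theta> z = exp (- \<theta> * z) - 1 + \<theta> * z * indicator {..<1} z"

definition hL :: "real \<Rightarrow> real \<Rightarrow> real" where
  "hL \<theta> z = indicator {0<..} z * ((fL \<theta> z + indicator {1..} z) / \<theta>)"

lemma expm_bounds:
  fixes x :: real assumes "0 \<le> x"
  shows "0 \<le> exp (-x) - 1 + x \<and> exp (-x) - 1 + x \<le> x^2"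
proof -
  have a: "1 + (-x) \<le> exp (-x)" by (rule exp_ge_add_one_self)
  have b: "1 + x \<le> exp x" by (rule exp_ge_add_one_self)
  have c: "(1 + x) * exp (-x) \<le> 1"
  proof -
    have "(1 + x) * exp (-x) \<le> exp x * exp (-x)" using b by (intro mult_right_mono) auto
    also have "\<dots> = 1" by (simp add: exp_minus)
    finally show ?thesis .
  qed
  have d: "exp (-x) - 1 + x \<le> x * (1 - exp (-x))" using c by (simp add: algebra_simps)
  have e: "x * (1 - exp (-x)) \<le> x * x" using a assms by (intro mult_left_mono) auto
  show ?thesis using a d e by (simp add: power2_eq_square)
qed

context
  fixes c \<sigma> :: real and Lm :: "real measure"
  assumes sp: "sp_levy_triple c \<sigma> Lm"
begin

lemma sL: "sets Lm = sets borel" using sp unfolding sp_levy_triple_def by auto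

lemma measL: "(f::real\<Rightarrow>real) \<in> borel_measurable borel \<Longrightarrow> f \<in> borel_measurable Lm"
proof -
  have "measurable Lm borel = measurable borel (borel :: real measure)" by (rule measurable_cong_sets[OF sL]) simp
  then show "f \<in> borel_measurable borel \<Longrightarrow> f \<in> borel_measurable Lm" by simp
qed

lemma AE_pos: "AE z in Lm. 0 < z"
proof (rule AE_I[where N="{..0}"])
  show "emeasure Lm {..0} = 0" using sp unfolding sp_levy_triple_def by auto
  show "{..0::real} \<in> sets Lm" using sL by simp
qed auto

lemma int_min: "integrable Lm (\<lambda>z. min 1 (z\<^sup>2))" using sp unfolding sp_levy_triple_def by auto

lemma int_ind1: "integrable Lm (indicator {1..} :: real \<Rightarrow> real)"
proof (rule Bochner_Integration.integrable_bound[OF int_min])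
  show "(indicator {1..} :: real \<Rightarrow> real) \<in> borel_measurable Lm" by (intro measL) measurable
  show "AE x in Lm. norm (indicator {1..} x :: real) \<le> norm (min 1 (x\<^sup>2))"
  proof (rule AE_I2)
    fix x :: real
    show "norm (indicator {1..} x :: real) \<le> norm (min 1 (x\<^sup>2))"
    proof (cases "1 \<le> x")
      case True
      then have "1 \<le> x^2" by (metis le_less_trans less_numeral_extra(1) one_le_power order_le_less)
      then show ?thesis using True by simp
    qed simp
  qed
qed

definition "KL = measure Lm {1..}"

lemma KL_int: "(\<integral>z. indicator {1..} z \<partial>Lm) = KL"
  unfolding KL_def using int_ind1 by (simp add: sets_eq_imp_space_eq[OF sL])

lemma fL_meas: "fL \<theta> \<in> borel_measurable Lm" unfolding fL_def by (intro measL) measurable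
lemma hL_meas: "hL \<theta> \<in> borel_measurable Lm" unfolding hL_def fL_def by (intro measL) measurable

lemma fL_int: assumes "0 \<le> \<theta>" shows "integrable Lm (fL \<theta>)"
proof (rule Bochner_Integration.integrable_bound)
  show "integrable Lm (\<lambda>z. (1 + \<theta>^2) * min 1 (z\<^sup>2))" using int_min by simp
  show "fL \<theta> \<in> borel_measurable Lm" by (rule fL_meas)
  show "AE z in Lm. norm (fL \<theta> z) \<le> norm ((1 + \<theta>^2) * min 1 (z\<^sup>2))"
    using AE_pos
  proof (rule AE_mp, intro AE_I2 impI)
    fix z :: real assume z: "0 < z"
    show "norm (fL \<theta> z) \<le> norm ((1 + \<theta>^2) * min 1 (z\<^sup>2))"
    proof (cases "z < 1")
      case True
      have eb: "0 \<le> exp (-(\<theta>*z)) - 1 + \<theta>*z \<and> exp (-(\<theta>*z)) - 1 + \<theta>*z \<le> (\<theta>*z)^2"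
        using expm_bounds[of "\<theta>*z"] assms z by auto
      have m: "min 1 (z\<^sup>2) = z^2" using True z by (simp add: power_le_one)
      have "(\<theta>*z)^2 \<le> (1 + \<theta>^2) * z^2" by (simp add: power_mult_distrib algebra_simps)
      then show ?thesis using eb True m unfolding fL_def by auto
    next
      case False
      have e1: "exp (- \<theta> * z) \<le> 1" using assms z by simp
      have m: "min 1 (z\<^sup>2) = 1" using False z
        by (metis min_def not_less one_le_power power2_eq_square)
      have "\<bar>exp (- \<theta> * z) - 1\<bar> \<le> 1" using e1 by simp
      also have "1 \<le> (1 + \<theta>^2)" by simp
      finally show ?thesis using False m unfolding fL_def by simp
    qed
  qed
qed

lemma hL_nonneg: assumes "0 < \<theta>" shows "0 \<le> hL \<theta> z"
proof (cases "0 < z")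
  case True
  have "0 \<le> fL \<theta> z + indicator {1..} z"
  proof (cases "z < 1")
    case True
    then show ?thesis using expm_bounds[of "\<theta>*z"] assms \<open>0 < z\<close> unfolding fL_def by auto
  next
    case False then show ?thesis unfolding fL_def by simp
  qed
  then show ?thesis using assms True unfolding hL_def by simp
qed (simp add: hL_def)

lemma hL_int: assumes "0 < \<theta>" shows "integrable Lm (hL \<theta>)"
proof -
  have "integrable Lm (\<lambda>z. (fL \<theta> z + indicator {1..} z) / \<theta>)"
    using fL_int[of \<theta>] int_ind1 assms by (intro integrable_divide Bochner_Integration.integrable_add) auto
  then have "integrable Lm (\<lambda>z. indicator {0<..} z *\<^sub>R ((fL \<theta> z + indicator {1..} z) / \<theta>))"
    by (intro integrable_mult_indicator) (use sL in auto)
  then show ?thesis unfolding hL_def by simp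
qed

lemma fL_hL: assumes "0 < \<theta>" shows "(\<integral>z. fL \<theta> z \<partial>Lm) = \<theta> * (\<integral>z. hL \<theta> z \<partial>Lm) - KL"
proof -
  have "(\<integral>z. hL \<theta> z \<partial>Lm) = (\<integral>z. (fL \<theta> z + indicator {1..} z) / \<theta> \<partial>Lm)"
  proof (rule integral_cong_AE[OF hL_meas])
    show "(\<lambda>z. (fL \<theta> z + indicator {1..} z) / \<theta>) \<in> borel_measurable Lm"
      unfolding fL_def by (intro measL) measurable
    show "AE z in Lm. hL \<theta> z = (fL \<theta> z + indicator {1..} z) / \<theta>"
      using AE_pos by eventually_elim (simp add: hL_def)
  qed
  also have "\<dots> = ((\<integral>z. fL \<theta> z \<partial>Lm) + KL) / \<theta>"
    using fL_int[of \<theta>] int_ind1 assms KL_int by simp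
  finally show ?thesis using assms by (simp add: field_simps)
qed

lemma psi_eq: assumes "0 < \<theta>"
  shows "psiY c \<sigma> Lm \<theta> = c*\<theta> + \<sigma>\<^sup>2/2*\<theta>\<^sup>2 + \<theta> * (\<integral>z. hL \<theta> z \<partial>Lm) - KL"
  using fL_hL[OF assms] unfolding psiY_def fL_def by simp

lemma psi_lower: assumes "0 < \<theta>" shows "c*\<theta> - KL \<le> psiY c \<sigma> Lm \<theta>"
proof -
  have "0 \<le> (\<integral>z. hL \<theta> z \<partial>Lm)" using hL_nonneg[OF assms] by simp
  then have "0 \<le> \<theta> * (\<integral>z. hL \<theta> z \<partial>Lm)" using assms by simp
  moreover have "0 \<le> \<sigma>\<^sup>2/2*\<theta>\<^sup>2" by simp
  ultimately show ?thesis using psi_eq[OF assms] by linarith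
qed

end



lemma quad_lim: "(s::real) > 0 \<Longrightarrow> filterlim (\<lambda>\<theta>::real. c*\<theta> + s*\<theta>^2 - K) at_top at_top"
  by real_asymp

context
  fixes c \<sigma> :: real and Lm :: "real measure"
  assumes sp: "sp_levy_triple c \<sigma> Lm"
begin

lemma hL_lim: "((\<lambda>n. hL (real (Suc n)) z) \<longlongrightarrow> indicator {0<..<1} z * z) sequentially"
proof (cases "0 < z")
  case False then show ?thesis by (simp add: hL_def)
next
  case True
  have l0: "((\<lambda>n::nat. (exp (- real (Suc n) * z) - 1) / real (Suc n)) \<longlongrightarrow> 0) sequentially"
    using True by real_asymp
  show ?thesis
  proof (cases "z < 1")
    case True
    have e: "hL (real (Suc n)) z = (exp (- real (Suc n) * z) - 1) / real (Suc n) + z" for n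
      using True \<open>0 < z\<close> unfolding hL_def fL_def by (simp add: field_simps del: of_nat_Suc)
    show ?thesis unfolding e using True \<open>0 < z\<close> tendsto_add[OF l0 tendsto_const[of z]] by simp
  next
    case False
    have e: "hL (real (Suc n)) z = (exp (- real (Suc n) * z) - 1) / real (Suc n) + 1 / real (Suc n)" for n
      using False \<open>0 < z\<close> unfolding hL_def fL_def by (simp add: field_simps del: of_nat_Suc)
    have l1: "((\<lambda>n::nat. 1 / real (Suc n)) \<longlongrightarrow> 0) sequentially" by real_asymp
    show ?thesis unfolding e using False \<open>0 < z\<close> using tendsto_add[OF l0 l1] by simp
  qed
qed

definition "mL = (\<integral>\<^sup>+ z. ennreal (indicator {0<..<1} z * z) \<partial>Lm)"

lemma fatou: "mL \<le> liminf (\<lambda>n. ennreal (\<integral>z. hL (real (Suc n)) z \<partial>Lm))"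
proof -
  have "mL = (\<integral>\<^sup>+ z. liminf (\<lambda>n. ennreal (hL (real (Suc n)) z)) \<partial>Lm)"
    unfolding mL_def
  proof (intro nn_integral_cong)
    fix z
    have "liminf (\<lambda>n. ennreal (hL (real (Suc n)) z)) = ennreal (indicator {0<..<1} z * z)"
      by (rule lim_imp_Liminf) (simp_all add: tendsto_ennrealI[OF hL_lim] del: of_nat_Suc)
    then show "ennreal (indicator {0<..<1} z * z) = liminf (\<lambda>n. ennreal (hL (real (Suc n)) z))" by simp
  qed
  also have "\<dots> \<le> liminf (\<lambda>n. \<integral>\<^sup>+ z. ennreal (hL (real (Suc n)) z) \<partial>Lm)"
    by (rule nn_integral_liminf) (use hL_meas[OF sp] in auto)
  also have "\<dots> = liminf (\<lambda>n. ennreal (\<integral>z. hL (real (Suc n)) z \<partial>Lm))"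
    by (intro arg_cong[where f="liminf"] ext nn_integral_eq_integral hL_int[OF sp] AE_I2 hL_nonneg[OF sp]) auto
  finally show ?thesis .
qed

lemma r_exists: assumes s0: "\<sigma> = 0" shows "\<exists>r. 0 < c + r \<and> (r \<le> 0 \<or> ennreal r < mL)"
proof -
  have gm: "(\<lambda>z. indicator {0<..<1} z * z) \<in> borel_measurable Lm" by (intro measL[OF sp]) measurable
  have sm: "(\<lambda>z. indicator {..<1} z *\<^sub>R z) \<in> borel_measurable Lm" by (intro measL[OF sp]) measurable
  have ae: "AE z in Lm. indicator {..<1} z *\<^sub>R z = indicator {0<..<1} z * z"
    using AE_pos[OF sp] by eventually_elim (simp add: indicator_def)
  have gnn: "AE z in Lm. 0 \<le> indicator {0<..<1} z * z"
    by (rule AE_I2) (simp add: indicator_def)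
  show ?thesis
  proof (cases "set_integrable Lm {..<1} (\<lambda>z. z)")
    case False
    have "\<not> mL < \<infinity>"
    proof
      assume "mL < \<infinity>"
      then have gi: "integrable Lm (\<lambda>z. indicator {0<..<1} z * z)"
        unfolding mL_def by (rule integrableI_nonneg[OF gm gnn])
      have "integrable Lm (\<lambda>z. indicator {..<1} z *\<^sub>R z)"
        using integrable_cong_AE[OF sm gm ae] gi by simp
      then show False using False unfolding set_integrable_def by simp
    qed
    then have mi: "mL = \<infinity>" by (metis infinity_ennreal_def less_top)
    show ?thesis
    proof (intro exI[of _ "\<bar>c\<bar> + 1"] conjI)
      show "0 < c + (\<bar>c\<bar> + 1)" by linarith
      show "\<bar>c\<bar> + 1 \<le> 0 \<or> ennreal (\<bar>c\<bar> + 1) < mL" unfolding mi by simp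
    qed
  next
    case True
    define l where "l = (LINT z:{..<1}|Lm. z)"
    have ns: "\<not> is_subordinator_triple c \<sigma> Lm" using sp unfolding sp_levy_triple_def by blast
    have pos: "0 < c + l" using ns s0 True unfolding is_subordinator_triple_def l_def by simp
    have gi: "integrable Lm (\<lambda>z. indicator {0<..<1} z * z)"
      using True integrable_cong_AE[OF sm gm ae] unfolding set_integrable_def by simp
    have le: "l = (\<integral>z. indicator {0<..<1} z * z \<partial>Lm)"
      unfolding l_def set_lebesgue_integral_def by (rule integral_cong_AE[OF sm gm ae])
    have ml: "mL = ennreal l" unfolding mL_def le by (rule nn_integral_eq_integral[OF gi gnn])
    have l0: "0 \<le> l" unfolding le by (rule integral_nonneg_AE[OF gnn])
    show ?thesis
    proof (intro exI[of _ "(l - c)/2"] conjI)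
      show "0 < c + (l - c)/2" using pos by (simp add: field_simps)
      show "(l - c)/2 \<le> 0 \<or> ennreal ((l - c)/2) < mL"
      proof (cases "(l - c)/2 \<le> 0")
        case False
        then have "ennreal ((l - c)/2) < ennreal l" using pos by (subst ennreal_less_iff) auto
        then show ?thesis unfolding ml by blast
      qed simp
    qed
  qed
qed

lemma psi_unb: "\<exists>\<theta>>T. psiY c \<sigma> Lm \<theta> > q"
proof (cases "\<sigma> = 0")
  case False
  have "filterlim (\<lambda>\<theta>::real. c*\<theta> + (\<sigma>\<^sup>2/2)*\<theta>^2 - KL Lm) at_top at_top"
    using quad_lim[of "\<sigma>\<^sup>2/2" c "KL Lm"] False by simp
  then have "eventually (\<lambda>\<theta>. c*\<theta> + (\<sigma>\<^sup>2/2)*\<theta>^2 - KL Lm > q) at_top"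
    by (rule filterlim_at_top_dense[THEN iffD1, rule_format])
  moreover have "eventually (\<lambda>\<theta>. \<theta> > max T 0) at_top" by (rule eventually_gt_at_top)
  ultimately have "eventually (\<lambda>\<theta>. c*\<theta> + (\<sigma>\<^sup>2/2)*\<theta>^2 - KL Lm > q \<and> \<theta> > max T 0) at_top"
    by (rule eventually_conj)
  then obtain N where N: "\<And>\<theta>. \<theta> \<ge> N \<Longrightarrow> c*\<theta> + (\<sigma>\<^sup>2/2)*\<theta>^2 - KL Lm > q \<and> \<theta> > max T 0"
    unfolding eventually_at_top_linorder by blast
  define \<theta> where "\<theta> = N"
  have th: "c*\<theta> + (\<sigma>\<^sup>2/2)*\<theta>^2 - KL Lm > q" "\<theta> > max T 0" using N[of N] unfolding \<theta>_def by auto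
  have "0 \<le> (\<integral>z. hL \<theta> z \<partial>Lm)" using hL_nonneg[OF sp, of \<theta>] th by simp
  then have "0 \<le> \<theta> * (\<integral>z. hL \<theta> z \<partial>Lm)" using th by simp
  then have "psiY c \<sigma> Lm \<theta> > q" using psi_eq[OF sp, of \<theta>] th by simp
  then show ?thesis using th by auto
next
  case True
  obtain r where r: "0 < c + r" "r \<le> 0 \<or> ennreal r < mL" using r_exists[OF True] by blast
  have ev: "eventually (\<lambda>n. r \<le> (\<integral>z. hL (real (Suc n)) z \<partial>Lm)) sequentially"
  proof (cases "r \<le> 0")
    case True
    show ?thesis
      by (rule always_eventually, rule allI, rule order_trans[OF True])
         (simp add: hL_nonneg[OF sp] del: of_nat_Suc)
  next
    case False
    then have "ennreal r < liminf (\<lambda>n. ennreal (\<integral>z. hL (real (Suc n)) z \<partial>Lm))"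
      using r fatou by (meson order_less_le_trans)
    then have "eventually (\<lambda>n. ennreal r < ennreal (\<integral>z. hL (real (Suc n)) z \<partial>Lm)) sequentially"
      by (rule less_LiminfD)
    then show ?thesis
      by eventually_elim (use False in \<open>auto simp: ennreal_less_iff\<close>)
  qed
  then obtain N where N: "\<And>n. n \<ge> N \<Longrightarrow> r \<le> (\<integral>z. hL (real (Suc n)) z \<partial>Lm)"
    unfolding eventually_sequentially by auto
  define M0 where "M0 = max T ((q + KL Lm)/(c + r))"
  define n where "n = max N (nat \<lceil>M0\<rceil>)"
  define \<theta> where "\<theta> = real (Suc n)"
  have "M0 \<le> real (nat \<lceil>M0\<rceil>)" by (rule real_nat_ceiling_ge)
  moreover have "real (nat \<lceil>M0\<rceil>) \<le> real n" unfolding n_def by simp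
  ultimately have thM: "\<theta> > M0" unfolding \<theta>_def by simp
  have th0: "\<theta> > 0" unfolding \<theta>_def by simp
  have hr: "r \<le> (\<integral>z. hL \<theta> z \<partial>Lm)" using N[of n] unfolding n_def \<theta>_def by simp
  have "(q + KL Lm)/(c + r) < \<theta>" using thM unfolding M0_def by simp
  then have q1: "q + KL Lm < \<theta> * (c + r)" using r(1) by (simp add: divide_less_eq mult.commute)
  have "\<theta> * r \<le> \<theta> * (\<integral>z. hL \<theta> z \<partial>Lm)" using hr th0 by (intro mult_left_mono) auto
  then have "psiY c \<sigma> Lm \<theta> > q" using psi_eq[OF sp th0] True q1 by (simp add: algebra_simps)
  moreover have "\<theta> > T" using thM unfolding M0_def by simp
  ultimately show ?thesis by auto
qed

end



lemma dpsi_bound: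
  fixes p :: "real \<Rightarrow> real"
  shows "\<exists>K0. \<forall>\<delta>>0. dpsi0 (\<lambda>\<theta>. p \<theta> + \<delta>*\<theta>) \<le> \<delta> + K0"
proof (cases "\<exists>L. ((\<lambda>\<theta>. p \<theta> / \<theta>) \<longlongrightarrow> L) (at_right 0)")
  case True
  then obtain L where L: "((\<lambda>\<theta>. p \<theta> / \<theta>) \<longlongrightarrow> L) (at_right 0)" by blast
  show ?thesis
  proof (intro exI[of _ L] allI impI)
    fix \<delta> :: real assume "\<delta> > 0"
    have ev: "eventually (\<lambda>\<theta>. p \<theta> / \<theta> + \<delta> = (p \<theta> + \<delta>*\<theta>) / \<theta>) (at_right (0::real))"
      using eventually_at_right_less[of 0] by eventually_elim (simp add: field_simps)
    have "((\<lambda>\<theta>. (p \<theta> + \<delta>*\<theta>) / \<theta>) \<longlongrightarrow> L + \<delta>) (at_right 0)"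
      using tendsto_add[OF L tendsto_const[of \<delta>]] ev by (rule Lim_transform_eventually)
    then have "dpsi0 (\<lambda>\<theta>. p \<theta> + \<delta>*\<theta>) = L + \<delta>"
      unfolding dpsi0_def by (intro tendsto_Lim) simp_all
    then show "dpsi0 (\<lambda>\<theta>. p \<theta> + \<delta>*\<theta>) \<le> \<delta> + L" by simp
  qed
next
  case False
  define u :: real where "u = (THE l. False)"
  show ?thesis
  proof (intro exI[of _ "\<bar>u\<bar>"] allI impI)
    fix \<delta> :: real assume d: "\<delta> > 0"
    have nl: "\<not> ((\<lambda>\<theta>. (p \<theta> + \<delta>*\<theta>) / \<theta>) \<longlongrightarrow> l) (at_right 0)" for l
    proof
      assume l: "((\<lambda>\<theta>. (p \<theta> + \<delta>*\<theta>) / \<theta>) \<longlongrightarrow> l) (at_right 0)"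
      have ev: "eventually (\<lambda>\<theta>. (p \<theta> + \<delta>*\<theta>) / \<theta> - \<delta> = p \<theta> / \<theta>) (at_right (0::real))"
        using eventually_at_right_less[of 0] by eventually_elim (simp add: field_simps)
      have "((\<lambda>\<theta>. p \<theta> / \<theta>) \<longlongrightarrow> l - \<delta>) (at_right 0)"
        using tendsto_diff[OF l tendsto_const[of \<delta>]] ev by (rule Lim_transform_eventually)
      then show False using False by blast
    qed
    have "dpsi0 (\<lambda>\<theta>. p \<theta> + \<delta>*\<theta>) = u"
      unfolding dpsi0_def t2_space_class.Lim_def u_def using nl by simp
    then show "dpsi0 (\<lambda>\<theta>. p \<theta> + \<delta>*\<theta>) \<le> \<delta> + \<bar>u\<bar>" using d by simp
  qed
qed


lemma main_claim:
  fixes c \<sigma> q \<beta> \<rho> :: real and Lm :: "real measure"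
    and WY :: "real \<Rightarrow> real" and WX :: "real \<Rightarrow> real \<Rightarrow> real"
  assumes sp: "sp_levy_triple c \<sigma> Lm"
    and q: "q > 0" and b0: "0 < \<beta>" and b1: "\<beta> < 1"
    and scY: "is_scale_fun (psiY c \<sigma> Lm) q WY"
    and scX: "\<And>\<delta>. \<delta> > 0 \<Longrightarrow> is_scale_fun (\<lambda>\<theta>. psiY c \<sigma> Lm \<theta> + \<delta> * \<theta>) q (WX \<delta>)"
    and B: "0 \<le> B"
  shows "eventually (\<lambda>\<delta>. selected_b q \<rho> \<beta> \<delta> WY (WX \<delta>)
                              (dpsi0 (\<lambda>\<theta>. psiY c \<sigma> Lm \<theta> + \<delta> * \<theta>)) > B) at_top"
proof -
  let ?p = "psiY c \<sigma> Lm"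
  have gY: "goodW WY" by (rule scale_good[OF scY psi_unb[OF sp]])
  have gX: "goodW (WX \<delta>)" if d: "\<delta> > 0" for \<delta>
  proof (rule scale_good[OF scX[OF d]])
    fix T
    obtain \<theta> where th: "\<theta> > max T 0" "?p \<theta> > q" using psi_unb[OF sp] by blast
    then have "?p \<theta> + \<delta> * \<theta> > q" using d by (smt (verit) mult_pos_pos max.strict_boundedE)
    then show "\<exists>\<theta>>T. ?p \<theta> + \<delta> * \<theta> > q" using th by auto
  qed
  obtain K0 where K0: "\<And>\<delta>. \<delta> > 0 \<Longrightarrow> dpsi0 (\<lambda>\<theta>. ?p \<theta> + \<delta>*\<theta>) \<le> \<delta> + K0"
    using dpsi_bound[of ?p] by blast
  define p1 where "p1 = ?p 1"
  define A where "A = q*B*exp (B+1)"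
  have A0: "0 \<le> A" unfolding A_def using q B by simp
  define D where "D = max 1 (max (q - p1 + 1) (max (q - p1 + A*\<beta>/(1-\<beta>)) ((q*\<bar>\<rho>\<bar> + q*B + \<beta>*\<bar>K0\<bar> + 1)/(1-\<beta>))))"
  have "eventually (\<lambda>\<delta>. \<delta> > D) at_top" by (rule eventually_gt_at_top)
  then show ?thesis
  proof eventually_elim
    fix \<delta> assume dD: "\<delta> > D"
    have d: "\<delta> > 0" and d1: "\<delta> > q - p1 + 1" and d2: "\<delta> > q - p1 + A*\<beta>/(1-\<beta>)"
      and d3: "\<delta> > (q*\<bar>\<rho>\<bar> + q*B + \<beta>*\<bar>K0\<bar> + 1)/(1-\<beta>)"
      using dD unfolding D_def by auto
    define dX where "dX = dpsi0 (\<lambda>\<theta>. ?p \<theta> + \<delta>*\<theta>)"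
    have dX: "dX \<le> \<delta> + K0" unfolding dX_def using K0[OF d] .
    have gx: "goodW (WX \<delta>)" using gX[OF d] .
    have pos: "0 < p1 + \<delta> - q" using d1 by simp
    have Wb: "WX \<delta> B \<le> exp (1*(B+1)) / ((\<lambda>\<theta>. ?p \<theta> + \<delta> * \<theta>) 1 - q)"
      by (rule scale_bound[OF scX[OF d]]) (use gx B d1 in \<open>auto simp: goodW_def p1_def\<close>)
    then have Wb': "WX \<delta> B \<le> exp (B+1) / (p1 + \<delta> - q)" by (simp add: p1_def)
    have Zb: "Zq q (WX \<delta>) B \<le> 1 + q*B*WX \<delta> B"
      using Z_mono_lip[OF gx, of q 0 B] q B by (simp add: Zq_def)
    have qBW: "q*B*WX \<delta> B \<le> A / (p1 + \<delta> - q)"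
    proof -
      have "q*B*WX \<delta> B \<le> q*B*(exp (B+1) / (p1 + \<delta> - q))"
        using Wb' q B by (intro mult_left_mono) auto
      then show ?thesis unfolding A_def by simp
    qed
    have Ab: "A*\<beta> \<le> (1-\<beta>)*(p1 + \<delta> - q)"
    proof -
      have "A*\<beta>/(1-\<beta>) < p1 + \<delta> - q" using d2 by simp
      then show ?thesis using b1 by (simp add: divide_less_eq mult.commute less_imp_le)
    qed
    have bz: "\<beta> * Zq q (WX \<delta>) B \<le> 1"
    proof -
      have "\<beta> * (A / (p1 + \<delta> - q)) \<le> 1 - \<beta>"
        using Ab pos by (simp add: divide_le_eq field_simps)
      moreover have "\<beta> * Zq q (WX \<delta>) B \<le> \<beta> * (1 + A / (p1 + \<delta> - q))"
        using Zb qBW b0 by (intro mult_left_mono) auto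
      ultimately show ?thesis by (simp add: algebra_simps)
    qed
    have low: "(1-\<beta>)*\<delta> > q*\<bar>\<rho>\<bar> + q*B + \<beta>*\<bar>K0\<bar>"
    proof -
      have "(q*\<bar>\<rho>\<bar> + q*B + \<beta>*\<bar>K0\<bar> + 1)/(1-\<beta>) < \<delta>" using d3 .
      then have "q*\<bar>\<rho>\<bar> + q*B + \<beta>*\<bar>K0\<bar> + 1 < \<delta>*(1-\<beta>)" using b1 by (simp add: divide_less_eq)
      then show ?thesis by (simp add: algebra_simps)
    qed
    have hpos: "Gam q \<rho> \<beta> \<delta> WY (WX \<delta>) dX a b > 0" if ab: "0 \<le> a" "a \<le> b" "b \<le> B" for a b
    proof -
      have "\<delta> - q*\<rho> - q*B - \<beta>*dX \<le> Gam q \<rho> \<beta> \<delta> WY (WX \<delta>) dX a b"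
        by (rule Gam_lower[OF gY gx q d b0 b1 ab bz])
      moreover have "\<beta>*dX \<le> \<beta>*(\<delta> + K0)" using dX b0 by (intro mult_left_mono) auto
      moreover have "q*\<rho> \<le> q*\<bar>\<rho>\<bar>" using q by (intro mult_left_mono) auto
      moreover have "\<beta>*K0 \<le> \<beta>*\<bar>K0\<bar>" using b0 by (intro mult_left_mono) auto
      ultimately show ?thesis using low by (simp add: algebra_simps)
    qed
    show "selected_b q \<rho> \<beta> \<delta> WY (WX \<delta>) (dpsi0 (\<lambda>\<theta>. ?p \<theta> + \<delta> * \<theta>)) > B"
      using sel_main[OF gY gx q d b0 b1 B hpos] unfolding dX_def by simp
  qed
qed

theorem mainTheorem12:
  fixes c \<sigma> q \<beta> \<rho> :: real and Lm :: "real measure"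
    and WY :: "real \<Rightarrow> real" and WX :: "real \<Rightarrow> real \<Rightarrow> real"
  assumes "sp_levy_triple c \<sigma> Lm"
    and "q > 0" and "0 < \<beta>" and "\<beta> < 1"
    and "is_scale_fun (psiY c \<sigma> Lm) q WY"
    and "\<And>\<delta>. \<delta> > 0 \<Longrightarrow> is_scale_fun (\<lambda>\<theta>. psiY c \<sigma> Lm \<theta> + \<delta> * \<theta>) q (WX \<delta>)"
  shows "eventually (\<lambda>\<delta>. selected_b q \<rho> \<beta> \<delta> WY (WX \<delta>)
                              (dpsi0 (\<lambda>\<theta>. psiY c \<sigma> Lm \<theta> + \<delta> * \<theta>)) > 0) at_top
    \<and> filterlim (\<lambda>\<delta>. selected_b q \<rho> \<beta> \<delta> WY (WX \<delta>)
                              (dpsi0 (\<lambda>\<theta>. psiY c \<sigma> Lm \<theta> + \<delta> * \<theta>))) at_top at_top"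
proof
  show "eventually (\<lambda>\<delta>. selected_b q \<rho> \<beta> \<delta> WY (WX \<delta>)
                              (dpsi0 (\<lambda>\<theta>. psiY c \<sigma> Lm \<theta> + \<delta> * \<theta>)) > 0) at_top"
    using main_claim[OF assms, where B=0] by simp
  show "filterlim (\<lambda>\<delta>. selected_b q \<rho> \<beta> \<delta> WY (WX \<delta>)
                              (dpsi0 (\<lambda>\<theta>. psiY c \<sigma> Lm \<theta> + \<delta> * \<theta>))) at_top at_top"
    unfolding filterlim_at_top
  proof
    fix Z :: real
    have "eventually (\<lambda>\<delta>. selected_b q \<rho> \<beta> \<delta> WY (WX \<delta>)
                              (dpsi0 (\<lambda>\<theta>. psiY c \<sigma> Lm \<theta> + \<delta> * \<theta>)) > max Z 0) at_top"
      using main_claim[OF assms, where B="max Z 0"] by simp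
    then show "eventually (\<lambda>\<delta>. Z \<le> selected_b q \<rho> \<beta> \<delta> WY (WX \<delta>)
                              (dpsi0 (\<lambda>\<theta>. psiY c \<sigma> Lm \<theta> + \<delta> * \<theta>))) at_top"
      by eventually_elim simp
  qed
qed



end
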